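(* Let $B$ be a skew-symmetrizable matrix and let $A$ and $A'$ be two admissible quasi-Cartan companions of $B$. Then $A'$ can be obtained from $A$ by a sequence of sign changes at vertices (i.e. simultaneous multiplication of the $k$-th row and $k$-th column by $-1$). In particular, $A$ and $A'$ are equivalent.
   Context: An $n\times n$ integer matrix $B$ is skew-symmetrizable if $DB$ is skew-symmetric for some diagonal matrix $D$ with positive diagonal entries. Its diagram $\Gamma(B)$ is the directed graph on vertices $1,\dots,n$ with an edge $i\to j$ iff $B_{ij}>0$, this edge carrying weight $|B_{ij}B_{ji}|$. A cycle in a diagram is an induced subgraph on $r\ge 3$ vertices whose vertices can be labeled $1,\dots,r$ so that $i,j$ are adjacent iff $|i-j|=1$ or $\{i,j\}=\{1,r\}$; it is oriented if its edges form a directed cycle, non-oriented otherwise. A quasi-Cartan matrix is an integer matrix $A$ with all diagonal entries $2$ such that $DA$ is symmetric for some diagonal $D$ with positive diagonal entries (a symmetrizer). A quasi-Cartan companion of $B$ is a quasi-Cartan matrix $A$ with $|A_{ij}|=|B_{ij}|$ for all $i\ne j$. It is admissible if for every cycle $Z$ in $\Gamma(B)$ the product $\prod_{\{i,j\}\in Z}(-A_{ij})$ over the edges of $Z$ is negative when $Z$ is oriented and positive when $Z$ is non-oriented. The sign change at $k$ replaces $A$ by the matrix obtained by multiplying its $k$-th row and $k$-th column by $-1$. Two quasi-Cartan matrices $A,A'$ are equivalent if they have a common symmetrizer $D$ and $DA'=E^T(DA)E$ for some integer matrix $E$ with $\det E=\pm1$. *)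

theory Defs
  imports "HOL-Analysis.Analysis"
begin

definition skew_symmetrizable :: "int^'n^'n \<Rightarrow> bool" where
  "skew_symmetrizable B \<longleftrightarrow>
     (\<exists>d::real^'n. (\<forall>i. d$i > 0) \<and>
        (\<forall>i j. d$i * of_int (B$i$j) = - (d$j * of_int (B$j$i))))"

definition is_symmetrizer :: "real^'n \<Rightarrow> int^'n^'n \<Rightarrow> bool" where
  "is_symmetrizer d A \<longleftrightarrow> (\<forall>i. d$i > 0) \<and>
     (\<forall>i j. d$i * of_int (A$i$j) = d$j * of_int (A$j$i))"

definition quasi_Cartan :: "int^'n^'n \<Rightarrow> bool" where
  "quasi_Cartan A \<longleftrightarrow> (\<forall>i. A$i$i = 2) \<and> (\<exists>d. is_symmetrizer d A)"

definition quasi_Cartan_companion :: "int^'n^'n \<Rightarrow> int^'n^'n \<Rightarrow> bool" where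
  "quasi_Cartan_companion B A \<longleftrightarrow> quasi_Cartan A \<and>
     (\<forall>i j. i \<noteq> j \<longrightarrow> \<bar>A$i$j\<bar> = \<bar>B$i$j\<bar>)"

definition adjacent :: "int^'n^'n \<Rightarrow> 'n \<Rightarrow> 'n \<Rightarrow> bool" where
  "adjacent B i j \<longleftrightarrow> B$i$j > 0 \<or> B$j$i > 0"

text \<open>A labeling f(0),...,f(r-1) of an induced cycle on r \<ge> 3 vertices
  (labels shifted from 1..r to 0..r-1).\<close>
definition cycle_labeling :: "int^'n^'n \<Rightarrow> nat \<Rightarrow> (nat \<Rightarrow> 'n) \<Rightarrow> bool" where
  "cycle_labeling B r f \<longleftrightarrow> 3 \<le> r \<and> inj_on f {0..<r} \<and>
     (\<forall>i<r. \<forall>j<r. adjacent B (f i) (f j) \<longleftrightarrow>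
        (i = Suc j \<or> j = Suc i \<or> {i, j} = {0, r - 1}))"

definition is_cycle :: "int^'n^'n \<Rightarrow> 'n set \<Rightarrow> bool" where
  "is_cycle B S \<longleftrightarrow> (\<exists>r f. cycle_labeling B r f \<and> f ` {0..<r} = S)"

definition oriented_cycle :: "int^'n^'n \<Rightarrow> 'n set \<Rightarrow> bool" where
  "oriented_cycle B S \<longleftrightarrow> (\<exists>r f. cycle_labeling B r f \<and> f ` {0..<r} = S \<and>
     (\<forall>k<r. B $ f k $ f ((k + 1) mod r) > 0))"

text \<open>Product of (-A_ij) over the edges of the cycle, i.e. over consecutive
  labels (each edge of the induced cycle occurs exactly once).\<close>
definition cycle_edge_prod :: "int^'n^'n \<Rightarrow> nat \<Rightarrow> (nat \<Rightarrow> 'n) \<Rightarrow> int" where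
  "cycle_edge_prod A r f = (\<Prod>k<r. - (A $ f k $ f ((k + 1) mod r)))"

definition admissible_companion :: "int^'n^'n \<Rightarrow> int^'n^'n \<Rightarrow> bool" where
  "admissible_companion B A \<longleftrightarrow> quasi_Cartan_companion B A \<and>
     (\<forall>r f. cycle_labeling B r f \<longrightarrow>
        (oriented_cycle B (f ` {0..<r}) \<longrightarrow> cycle_edge_prod A r f < 0) \<and>
        (\<not> oriented_cycle B (f ` {0..<r}) \<longrightarrow> cycle_edge_prod A r f > 0))"

definition sign_change :: "'n \<Rightarrow> int^'n^'n \<Rightarrow> int^'n^'n" where
  "sign_change k A = (\<chi> i j. (if i = k then -1 else 1) * (if j = k then -1 else 1) * A$i$j)"

definition sign_changes :: "'n list \<Rightarrow> int^'n^'n \<Rightarrow> int^'n^'n" where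
  "sign_changes ks A = fold sign_change ks A"

definition sym_form :: "real^'n \<Rightarrow> int^'n^'n \<Rightarrow> real^'n^'n" where
  "sym_form d A = (\<chi> i j. d$i * of_int (A$i$j))"

definition qc_equivalent :: "int^'n^'n \<Rightarrow> int^'n^'n \<Rightarrow> bool" where
  "qc_equivalent A A' \<longleftrightarrow> (\<exists>d. is_symmetrizer d A \<and> is_symmetrizer d A' \<and>
     (\<exists>E::int^'n^'n. (det E = 1 \<or> det E = -1) \<and>
        sym_form d A' = transpose (\<chi> i j. real_of_int (E$i$j)) ** sym_form d A ** (\<chi> i j. real_of_int (E$i$j))))"

end

theory Submission
  imports Defs
begin

fun pp :: "('a \<Rightarrow> 'a \<Rightarrow> int) \<Rightarrow> 'a list \<Rightarrow> int" where
  "pp e (x#y#zs) = e x y * pp e (y#zs)" | "pp e _ = 1"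

fun walk :: "('a \<Rightarrow> 'a \<Rightarrow> bool) \<Rightarrow> 'a list \<Rightarrow> bool" where
  "walk adj (x#y#zs) = (adj x y \<and> walk adj (y#zs))" | "walk adj _ = True"

lemma pp_append: "pp e (xs @ y # ys) = pp e (xs @ [y]) * pp e (y # ys)"
  by (induction xs rule: induct_list012) auto

lemma walk_append: "walk adj (xs @ y # ys) = (walk adj (xs @ [y]) \<and> walk adj (y # ys))"
  by (induction xs rule: induct_list012) auto

lemma pp_app2: "xs \<noteq> [] \<Longrightarrow> ys \<noteq> [] \<Longrightarrow> pp e (xs @ ys) = pp e xs * e (last xs) (hd ys) * pp e ys"
  by (induction xs rule: induct_list012) (auto simp: neq_Nil_conv)

lemma walk_app2: "xs \<noteq> [] \<Longrightarrow> ys \<noteq> [] \<Longrightarrow> walk adj (xs @ ys) = (walk adj xs \<and> adj (last xs) (hd ys) \<and> walk adj ys)"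
  by (induction xs rule: induct_list012) (auto simp: neq_Nil_conv)

lemma pp_rev: "(\<And>x y. e x y = e y x) \<Longrightarrow> pp e (rev xs) = pp e xs"
proof (induction xs rule: induct_list012)
  case (3 x y zs)
  have "pp e (rev (x#y#zs)) = pp e (rev (y#zs) @ [x])" by simp
  also have "\<dots> = pp e (rev (y#zs)) * e y x" by (subst pp_app2) (auto simp: last_rev)
  finally show ?case using 3 by simp
qed auto

lemma walk_rev: "(\<And>x y. adj x y = adj y x) \<Longrightarrow> walk adj (rev xs) = walk adj xs"
proof (induction xs rule: induct_list012)
  case (3 x y zs)
  have "walk adj (rev (x#y#zs)) = walk adj (rev (y#zs) @ [x])" by simp
  also have "\<dots> = (walk adj (rev (y#zs)) \<and> adj y x)" by (subst walk_app2) (auto simp: last_rev)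
  finally show ?case using 3 by auto
qed auto

lemma pp_abs: "(\<And>x y. \<bar>e x y\<bar> = 1) \<Longrightarrow> \<bar>pp e xs\<bar> = 1"
  by (induction xs rule: induct_list012) (auto simp: abs_mult)

definition chordfree :: "('a \<Rightarrow> 'a \<Rightarrow> bool) \<Rightarrow> 'a list \<Rightarrow> bool" where
  "chordfree adj xs \<longleftrightarrow> \<not> (\<exists>ys a zs b ws. xs = ys @ a # zs @ b # ws \<and> zs \<noteq> [] \<and>
      2 \<le> length ys + length ws \<and> adj a b)"

lemma closed_pp:
  assumes sym: "\<And>x y. adj x y = adj y x" and esym: "\<And>x y. e x y = e y x"
    and eabs: "\<And>x y. \<bar>e x y\<bar> = 1" and irr: "\<And>x. \<not> adj x x"
    and ind: "\<And>xs. walk adj xs \<Longrightarrow> hd xs = last xs \<Longrightarrow> 4 \<le> length xs \<Longrightarrow>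
               distinct (butlast xs) \<Longrightarrow> chordfree adj xs \<Longrightarrow> pp e xs = 1"
  shows "walk adj xs \<Longrightarrow> xs \<noteq> [] \<Longrightarrow> hd xs = last xs \<Longrightarrow> pp e xs = 1"
proof (induction "length xs" arbitrary: xs rule: less_induct)
  case less
  have ee: "e a b * e b a = 1" for a b
  proof -
    have "e a b * e a b = \<bar>e a b\<bar> * \<bar>e a b\<bar>" by (rule abs_mult_self_eq[symmetric])
    also have "\<dots> = 1" using eabs[of a b] by simp
    finally show ?thesis using esym[of a b] by simp
  qed
  show ?case
  proof (cases "length xs \<le> 3")
    case True
    then consider (one) a where "xs = [a]" | (two) a b where "xs = [a,b]" | (three) a b c where "xs = [a,b,c]"
      using less.prems(2)
      by (cases xs; cases "tl xs"; cases "tl (tl xs)"; cases "tl (tl (tl xs))"; auto)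
    then show ?thesis
    proof cases
      case one then show ?thesis by auto
    next
      case two then show ?thesis using less.prems irr by auto
    next
      case three then show ?thesis using less.prems ee by auto
    qed
  next
    case False
    hence len: "4 \<le> length xs" by simp
    show ?thesis
    proof (cases "distinct (butlast xs)")
      case False
      then obtain ys u zs ws where bl: "butlast xs = ys @ [u] @ zs @ [u] @ ws"
        using not_distinct_decomp by blast
      define ws' where "ws' = ws @ [last xs]"
      have xs: "xs = ys @ u # (zs @ u # ws')"
      proof -
        have "xs = butlast xs @ [last xs]" using less.prems(2) by simp
        also have "\<dots> = ys @ u # zs @ u # ws'" unfolding bl ws'_def by simp
        finally show ?thesis .
      qed
      have lenxs: "length xs = length ys + length zs + length ws' + 2"
        using arg_cong[OF xs, of length] by simp
      have hdx: "hd (ys @ u # ws') = hd xs" using arg_cong[OF xs, of hd] by (simp add: hd_append)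
      have lx: "last (ys @ u # ws') = last xs" using ws'_def by simp
      have wx: "walk adj (ys @ u # (zs @ u # ws'))" using less.prems(1) xs by simp
      have w2a: "walk adj (ys @ [u])" and wr: "walk adj ((u # zs) @ u # ws')"
        using wx walk_append[of adj ys u "zs @ u # ws'"] by simp_all
      have w1: "walk adj (u # zs @ [u])" and w2b: "walk adj (u # ws')"
        using wr walk_append[of adj "u#zs" u ws'] by simp_all
      have p1: "pp e (u # zs @ [u]) = 1"
        by (rule less.hyps) (use w1 lenxs ws'_def in auto)
      have w2: "walk adj (ys @ u # ws')" using w2a w2b walk_append[of adj ys u ws'] by simp
      have p2: "pp e (ys @ u # ws') = 1"
        by (rule less.hyps) (use w2 lenxs hdx lx less.prems(3) in auto)
      have "pp e xs = pp e (ys @ [u]) * pp e (u # zs @ [u]) * pp e (u # ws')"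
        unfolding xs using pp_append[of e ys u "zs @ u # ws'"] pp_append[of e "u#zs" u ws'] by simp
      also have "\<dots> = pp e (ys @ u # ws')" using p1 pp_append[of e ys u ws'] by simp
      finally show ?thesis using p2 by simp
    next
      case dist: True
      show ?thesis
      proof (cases "chordfree adj xs")
        case True then show ?thesis using ind less.prems dist len by blast
      next
        case False
        then obtain ys a zs b ws where xs: "xs = ys @ a # zs @ b # ws" and zs: "zs \<noteq> []"
          and l2: "2 \<le> length ys + length ws" and ab: "adj a b"
          unfolding chordfree_def by blast
        have wa: "walk adj (ys @ [a])" and wb: "walk adj (a # zs @ [b])" and wc: "walk adj (b # ws)"
          using less.prems(1) unfolding xs by (metis walk_append append_Cons append.assoc)+
        have w1: "walk adj (a # zs @ [b, a])"
          using wb ab sym walk_append[of adj "a#zs" b "[a]"] by auto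
        have w2: "walk adj (ys @ a # b # ws)"
          using wa wc ab walk_append[of adj ys a "b#ws"] by auto
        have p1: "pp e (a # zs @ [b, a]) = 1"
          by (rule less.hyps) (use w1 xs l2 in auto)
        have p2: "pp e (ys @ a # b # ws) = 1"
          by (rule less.hyps) (use w2 xs zs less.prems(3) in \<open>auto simp: hd_append\<close>)
        have q1: "pp e (a # zs @ [b, a]) = pp e (a # zs @ [b]) * e b a"
          using pp_append[of e "a#zs" b "[a]"] by simp
        have q2: "pp e (ys @ a # b # ws) = pp e (ys @ [a]) * e a b * pp e (b # ws)"
          using pp_append[of e ys a "b#ws"] by simp
        have "pp e xs = pp e (ys @ [a]) * pp e (a # zs @ [b]) * pp e (b # ws)"
          unfolding xs by (metis pp_append append_Cons append.assoc mult.assoc)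
        also have "\<dots> = pp e (a # zs @ [b, a]) * pp e (ys @ a # b # ws)"
          unfolding q1 q2 using ee[of a b] by (simp add: algebra_simps)
        finally show ?thesis using p1 p2 by simp
      qed
    qed
  qed
qed

lemma reach_walk: "adj\<^sup>*\<^sup>* u v \<Longrightarrow> \<exists>xs. xs \<noteq> [] \<and> hd xs = u \<and> last xs = v \<and> walk adj xs"
proof (induction rule: rtranclp_induct)
  case base then show ?case by (intro exI[of _ "[u]"]) auto
next
  case (step y z)
  then obtain xs where "xs \<noteq> [] \<and> hd xs = u \<and> last xs = y \<and> walk adj xs" by blast
  then show ?case using step by (intro exI[of _ "xs @ [z]"]) (auto simp: walk_app2)
qed

lemma coboundary:
  assumes sym: "\<And>x y. adj x y = adj y x" and esym: "\<And>x y. e x y = e y x"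
    and eabs: "\<And>x y. \<bar>e x y\<bar> = 1"
    and cl: "\<And>xs. walk adj xs \<Longrightarrow> xs \<noteq> [] \<Longrightarrow> hd xs = last xs \<Longrightarrow> pp e xs = 1"
  shows "\<exists>s. (\<forall>v. \<bar>s v\<bar> = 1) \<and> (\<forall>i j. adj i j \<longrightarrow> e i j = s i * s j)"
proof -
  define R where "R = adj\<^sup>*\<^sup>*"
  have Rsym: "R u v \<Longrightarrow> R v u" for u v
    unfolding R_def
    by (induction rule: rtranclp_induct) (auto, metis sym converse_rtranclp_into_rtranclp)
  define root where "root v = (SOME u. R v u)" for v
  have rr: "R v (root v)" for v unfolding root_def by (rule someI[of _ v]) (simp add: R_def)
  define P where "P v = (SOME xs. xs \<noteq> [] \<and> hd xs = root v \<and> last xs = v \<and> walk adj xs)" for v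
  have Pv: "P v \<noteq> [] \<and> hd (P v) = root v \<and> last (P v) = v \<and> walk adj (P v)" for v
  proof -
    have "adj\<^sup>*\<^sup>* (root v) v" using Rsym[OF rr[of v]] unfolding R_def .
    from reach_walk[OF this] show ?thesis unfolding P_def by (rule someI_ex)
  qed
  define s where "s v = pp e (P v)" for v
  have sabs: "\<bar>s v\<bar> = 1" for v unfolding s_def using pp_abs eabs by blast
  show ?thesis
  proof (intro exI conjI allI impI)
    show "\<bar>s v\<bar> = 1" for v by (rule sabs)
    fix i j assume ij: "adj i j"
    have "R i = R j"
    proof
      fix w
      have ij1: "R i j" using ij unfolding R_def by (rule r_into_rtranclp)
      have ji1: "R j i" using ij sym unfolding R_def by (metis r_into_rtranclp)
      show "R i w = R j w"
      proof
        assume "R i w" then show "R j w" using ji1 unfolding R_def by (rule rtranclp_trans[rotated])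
      next
        assume "R j w" then show "R i w" using ij1 unfolding R_def by (rule rtranclp_trans[rotated])
      qed
    qed
    hence rt: "root i = root j" unfolding root_def by simp
    let ?W = "P i @ rev (P j)"
    have wr: "walk adj (rev (P j))" using Pv[of j] walk_rev[of adj "P j"] sym by blast
    have "walk adj ?W" using Pv[of i] Pv[of j] ij wr walk_app2[of "P i" "rev (P j)" adj]
      by (simp add: hd_rev)
    moreover have "hd ?W = last ?W" using Pv[of i] Pv[of j] rt by (auto simp: last_rev)
    moreover have "?W \<noteq> []" using Pv[of i] by simp
    ultimately have "pp e ?W = 1" using cl by blast
    moreover have "pp e ?W = pp e (P i) * e (last (P i)) (hd (rev (P j))) * pp e (rev (P j))"
      using Pv[of i] Pv[of j] by (intro pp_app2) auto
    moreover have "pp e (rev (P j)) = pp e (P j)" using pp_rev[of e "P j"] esym by blast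
    ultimately have "s i * e i j * s j = 1" unfolding s_def using Pv[of i] Pv[of j]
      by (simp add: hd_rev)
    note h = this
    have sii: "s i * s i = 1" and sjj: "s j * s j = 1" using abs_mult_self_eq[of "s i"] abs_mult_self_eq[of "s j"] sabs[of i] sabs[of j] by simp_all
    have "e i j = e i j * (s i * s i) * (s j * s j)" by (simp add: sii sjj)
    also have "\<dots> = s i * s j * (s i * e i j * s j)" by (simp only: mult_ac)
    also have "\<dots> = s i * s j" using h by simp
    finally show "e i j = s i * s j" .
  qed
qed


lemma pp_nth: "pp e xs = (\<Prod>k < length xs - 1. e (xs!k) (xs!Suc k))"
  by (induction xs rule: induct_list012) (auto simp del: prod.lessThan_Suc simp add: prod.lessThan_Suc_shift)

lemma walk_nth: "walk adj xs \<Longrightarrow> Suc k < length xs \<Longrightarrow> adj (xs!k) (xs!Suc k)"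
  by (induction xs arbitrary: k rule: induct_list012) (auto simp: less_Suc_eq_0_disj)

lemma fold_sc: "distinct ks \<Longrightarrow> fold sign_change ks M =
  (\<chi> i j. (if i \<in> set ks then -1 else 1) * (if j \<in> set ks then -1 else 1) * M$i$j)"
proof (induction ks arbitrary: M)
  case Nil then show ?case by (simp add: vec_eq_iff)
next
  case (Cons k ks)
  then show ?case by (auto simp: vec_eq_iff sign_change_def)
qed

lemma sum_delta_mult: "(\<Sum>l\<in>(UNIV::'n::finite set). (if l = i then a l else 0) * (b l :: real)) = a i * b i"
proof -
  have "(\<Sum>l\<in>(UNIV::'n set). (if l = i then a l else 0) * b l) = (\<Sum>l\<in>UNIV. if l = i then a l * b l else 0)" by (rule sum.cong) auto
  also have "\<dots> = a i * b i" by simp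
  finally show ?thesis .
qed

lemma sum_delta_mult2: "(\<Sum>l\<in>(UNIV::'n::finite set). (b l :: real) * (if l = j then a l else 0)) = b j * a j"
proof -
  have "(\<Sum>l\<in>(UNIV::'n set). b l * (if l = j then a l else 0)) = (\<Sum>l\<in>UNIV. if l = j then b l * a l else 0)" by (rule sum.cong) auto
  also have "\<dots> = b j * a j" by simp
  finally show ?thesis .
qed

lemma diag_conj:
  fixes M :: "real^'n^'n"
  shows "(transpose (\<chi> i j. if i = j then t i else 0) ** M ** (\<chi> i j. if i = j then t i else 0)) $ i $ j
     = t i * M$i$j * t j"
  by (simp add: matrix_matrix_mult_def transpose_def sum_delta_mult sum_delta_mult2)

lemma cep_eq:
  assumes xs: "hd xs = last xs" "xs \<noteq> []" and r: "r = length xs - 1" "1 \<le> r"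
    and AA: "\<And>i j. A' $ i $ j = e i j * A $ i $ j"
  shows "cycle_edge_prod A' r (nth xs) = pp e xs * cycle_edge_prod A r (nth xs)"
proof -
  have nx: "xs ! (Suc k mod r) = xs ! Suc k" if "k < r" for k
  proof (cases "Suc k < r")
    case True then show ?thesis by simp
  next
    case False
    hence "Suc k = r" using that by simp
    moreover have "xs ! 0 = xs ! r" using xs r by (simp add: hd_conv_nth last_conv_nth)
    ultimately show ?thesis by simp
  qed
  have "cycle_edge_prod A' r (nth xs) = (\<Prod>k<r. e (xs!k) (xs!Suc k) * - (A $ (xs!k) $ (xs!Suc k)))"
    unfolding cycle_edge_prod_def by (rule prod.cong) (auto simp: nx AA)
  also have "\<dots> = pp e xs * cycle_edge_prod A r (nth xs)"
    unfolding cycle_edge_prod_def pp_nth prod.distrib r(1)[symmetric]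
    by (simp add: nx)
  finally show ?thesis .
qed


lemma cyc_lab:
  assumes irr: "\<And>x. \<not> adjacent B x x" and asym: "\<And>x y. adjacent B x y = adjacent B y x"
    and w: "walk (adjacent B) xs" and hl: "hd xs = last xs" and l4: "4 \<le> length xs"
    and d: "distinct (butlast xs)" and cf: "chordfree (adjacent B) xs"
  shows "cycle_labeling B (length xs - 1) (nth xs)"
proof -
  define r where "r = length xs - 1"
  have ne: "xs \<noteq> []" using l4 by auto
  have xr: "xs ! r = xs ! 0" using hl ne by (simp add: r_def hd_conv_nth last_conv_nth)
  have inj: "inj_on (nth xs) {0..<r}"
  proof -
    have ib: "inj_on (nth (butlast xs)) {0..<r}" using d by (intro inj_on_nth) (auto simp: r_def)
    show ?thesis by (rule inj_on_cong[THEN iffD1, OF _ ib]) (auto simp: r_def nth_butlast)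
  qed
  have cons: "adjacent B (xs!k) (xs!Suc k)" if "k < r" for k using walk_nth[OF w] that r_def by auto
  have chord: "j = Suc i \<or> (i = 0 \<and> j = r - 1)" if ij: "i < j" "j < r" and a: "adjacent B (xs!i) (xs!j)" for i j
  proof (rule ccontr)
    assume nc: "\<not> (j = Suc i \<or> (i = 0 \<and> j = r - 1))"
    define ys where "ys = take i xs"
    define zs where "zs = drop (Suc i) (take j xs)"
    define ws where "ws = drop (Suc j) xs"
    have jl: "j < length xs" using ij r_def by simp
    have e1: "xs = take j xs @ xs!j # drop (Suc j) xs" using id_take_nth_drop[OF jl] .
    have il: "i < length (take j xs)" using ij jl by simp
    have e2: "take j xs = ys @ xs!i # zs"
      using id_take_nth_drop[OF il] ij unfolding ys_def zs_def by (simp add: min_def)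
    have "xs = take j xs @ xs!j # ws" using e1 unfolding ws_def .
    also have "\<dots> = ys @ xs!i # zs @ xs!j # ws" by (simp add: e2)
    finally have xs: "xs = ys @ xs!i # zs @ xs!j # ws" .
    have "zs \<noteq> []" using nc ij jl unfolding zs_def by auto
    moreover have "2 \<le> length ys + length ws" using nc ij jl unfolding ys_def ws_def r_def by auto
    ultimately show False using cf a xs unfolding chordfree_def by blast
  qed
  have "adjacent B (xs!i) (xs!j) \<longleftrightarrow> (i = Suc j \<or> j = Suc i \<or> {i, j} = {0, r - 1})"
    if ir: "i < r" "j < r" for i j
  proof
    assume a: "adjacent B (xs!i) (xs!j)"
    consider "i < j" | "i = j" | "j < i" by arith
    then show "i = Suc j \<or> j = Suc i \<or> {i, j} = {0, r - 1}"
    proof cases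
      case 1 then show ?thesis using chord[OF 1 ir(2) a] by auto
    next
      case 2 then show ?thesis using a irr by auto
    next
      case 3 then show ?thesis using chord[OF 3 ir(1)] a asym by auto
    qed
  next
    assume h: "i = Suc j \<or> j = Suc i \<or> {i, j} = {0, r - 1}"
    have r3: "3 \<le> r" using l4 r_def by simp
    have last: "adjacent B (xs!(r-1)) (xs!0)" using cons[of "r-1"] r3 xr by simp
    from h show "adjacent B (xs!i) (xs!j)"
    proof (elim disjE)
      assume "i = Suc j" then show ?thesis using cons[of j] ir asym by auto
    next
      assume "j = Suc i" then show ?thesis using cons[of i] ir by auto
    next
      assume "{i, j} = {0, r - 1}"
      hence "(i = 0 \<and> j = r - 1) \<or> (i = r - 1 \<and> j = 0)" by (auto simp: doubleton_eq_iff)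
      then show ?thesis using last asym by auto
    qed
  qed
  then show ?thesis unfolding cycle_labeling_def r_def[symmetric] using inj l4 r_def by auto
qed

lemma sign_sym:
  assumes "is_symmetrizer d A"
  shows "(A$i$j > 0 \<longleftrightarrow> A$j$i > 0) \<and> (A$i$j < 0 \<longleftrightarrow> A$j$i < 0)"
proof -
  have di: "d$i > 0" and dj: "d$j > 0" and eq: "d$i * of_int (A$i$j) = d$j * of_int (A$j$i)"
    using assms unfolding is_symmetrizer_def by auto
  have "A$i$j > 0 \<longleftrightarrow> d$i * of_int (A$i$j) > 0" using di by (simp add: zero_less_mult_iff)
  moreover have "A$j$i > 0 \<longleftrightarrow> d$j * of_int (A$j$i) > 0" using dj by (simp add: zero_less_mult_iff)
  moreover have "A$i$j < 0 \<longleftrightarrow> d$i * of_int (A$i$j) < 0" using di by (simp add: mult_less_0_iff)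
  moreover have "A$j$i < 0 \<longleftrightarrow> d$j * of_int (A$j$i) < 0" using dj by (simp add: mult_less_0_iff)
  ultimately show ?thesis using eq by simp
qed

lemma esym_aux:
  fixes a b a' b' :: int
  assumes "(a>0 \<longleftrightarrow> b>0)" "(a<0 \<longleftrightarrow> b<0)" "(a'>0 \<longleftrightarrow> b'>0)" "(a'<0 \<longleftrightarrow> b'<0)"
    "\<bar>a'\<bar> = \<bar>a\<bar>" "\<bar>b'\<bar> = \<bar>b\<bar>"
  shows "a' = a \<longleftrightarrow> b' = b"
  using assms by arith


theorem mainTheorem1:
  fixes B A A' :: "int^'n^'n"
  assumes "skew_symmetrizable B"
    and "admissible_companion B A"
    and "admissible_companion B A'"
  shows "(\<exists>ks. A' = sign_changes ks A) \<and> qc_equivalent A A'"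
proof -
  obtain dB :: "real^'n" where dBpos: "\<And>i. dB$i > 0"
    and dBs: "\<And>i j. dB$i * of_int (B$i$j) = - (dB$j * of_int (B$j$i))"
    using assms(1) unfolding skew_symmetrizable_def by blast
  have asym: "\<And>x y. adjacent B x y = adjacent B y x" by (auto simp: adjacent_def)
  have Bii: "B$x$x = 0" for x using dBs[of x x] dBpos[of x] by simp
  have irr: "\<not> adjacent B x x" for x using Bii by (simp add: adjacent_def)
  have adjnz: "adjacent B i j \<longleftrightarrow> B$i$j \<noteq> 0" for i j
  proof -
    have "B$i$j > 0 \<longleftrightarrow> dB$i * of_int (B$i$j) > 0" using dBpos[of i] by (simp add: zero_less_mult_iff)
    moreover have "B$j$i > 0 \<longleftrightarrow> dB$j * of_int (B$j$i) > 0" using dBpos[of j] by (simp add: zero_less_mult_iff)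
    moreover have "B$i$j < 0 \<longleftrightarrow> dB$i * of_int (B$i$j) < 0" using dBpos[of i] by (simp add: mult_less_0_iff)
    ultimately show ?thesis using dBs[of i j] unfolding adjacent_def by auto
  qed
  have cA: "quasi_Cartan_companion B A" and cA': "quasi_Cartan_companion B A'"
    using assms(2,3) unfolding admissible_companion_def by auto
  obtain d where dA: "is_symmetrizer d A" and A2: "\<And>i. A$i$i = 2"
    and absA: "\<And>i j. i \<noteq> j \<Longrightarrow> \<bar>A$i$j\<bar> = \<bar>B$i$j\<bar>"
    using cA unfolding quasi_Cartan_companion_def quasi_Cartan_def by blast
  obtain d' where dA': "is_symmetrizer d' A'" and A2': "\<And>i. A'$i$i = 2"
    and absA': "\<And>i j. i \<noteq> j \<Longrightarrow> \<bar>A'$i$j\<bar> = \<bar>B$i$j\<bar>"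
    using cA' unfolding quasi_Cartan_companion_def quasi_Cartan_def by blast
  define e where "e i j = (if A'$i$j = A$i$j then 1 else (-1::int))" for i j
  have AA: "A'$i$j = e i j * A$i$j" for i j
  proof (cases "i = j")
    case True then show ?thesis using A2 A2' by (simp add: e_def)
  next
    case False
    hence "\<bar>A'$i$j\<bar> = \<bar>A$i$j\<bar>" using absA absA' by simp
    then show ?thesis unfolding e_def by arith
  qed
  have absAA: "\<bar>A'$i$j\<bar> = \<bar>A$i$j\<bar>" for i j
    by (cases "i = j") (simp_all add: A2 A2' absA absA')
  have esym: "\<And>x y. e x y = e y x"
  proof -
    fix x y
    have "A'$x$y = A$x$y \<longleftrightarrow> A'$y$x = A$y$x"
      by (rule esym_aux) (use sign_sym[OF dA, of x y] sign_sym[OF dA', of x y] absAA in auto)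
    then show "e x y = e y x" unfolding e_def by simp
  qed
  have eabs: "\<And>x y. \<bar>e x y\<bar> = 1" by (simp add: e_def)
  have Anz: "A$i$j = 0" if "i \<noteq> j" "\<not> adjacent B i j" for i j
    using absA[OF that(1)] adjnz[of i j] that(2) by simp
  have ind: "pp e xs = 1" if w: "walk (adjacent B) xs" and hl: "hd xs = last xs" and l4: "4 \<le> length xs"
    and dd: "distinct (butlast xs)" and cf: "chordfree (adjacent B) xs" for xs
  proof -
    define r where "r = length xs - 1"
    have cl: "cycle_labeling B r (nth xs)" unfolding r_def
      by (rule cyc_lab[OF irr asym w hl l4 dd cf])
    have adA: "(oriented_cycle B (nth xs ` {0..<r}) \<longrightarrow> cycle_edge_prod A r (nth xs) < 0) \<and>
        (\<not> oriented_cycle B (nth xs ` {0..<r}) \<longrightarrow> cycle_edge_prod A r (nth xs) > 0)"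
      using assms(2) cl unfolding admissible_companion_def by blast
    have adA': "(oriented_cycle B (nth xs ` {0..<r}) \<longrightarrow> cycle_edge_prod A' r (nth xs) < 0) \<and>
        (\<not> oriented_cycle B (nth xs ` {0..<r}) \<longrightarrow> cycle_edge_prod A' r (nth xs) > 0)"
      using assms(3) cl unfolding admissible_companion_def by blast
    have pos: "cycle_edge_prod A r (nth xs) * cycle_edge_prod A' r (nth xs) > 0"
      using adA adA' by (cases "oriented_cycle B (nth xs ` {0..<r})") (auto simp: mult_neg_neg)
    have ce: "cycle_edge_prod A' r (nth xs) = pp e xs * cycle_edge_prod A r (nth xs)"
      by (rule cep_eq) (use hl l4 r_def AA in auto)
    have "\<bar>pp e xs\<bar> = 1" using pp_abs eabs by blast
    hence "pp e xs = 1 \<or> pp e xs = -1" by arith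
    moreover have "pp e xs \<noteq> -1"
    proof
      assume "pp e xs = -1"
      hence "cycle_edge_prod A r (nth xs) * cycle_edge_prod A' r (nth xs) =
        - (cycle_edge_prod A r (nth xs) * cycle_edge_prod A r (nth xs))" using ce by simp
      moreover have "cycle_edge_prod A r (nth xs) * cycle_edge_prod A r (nth xs) \<ge> 0" by simp
      ultimately show False using pos by linarith
    qed
    ultimately show ?thesis by blast
  qed
  have clw: "\<And>xs. walk (adjacent B) xs \<Longrightarrow> xs \<noteq> [] \<Longrightarrow> hd xs = last xs \<Longrightarrow> pp e xs = 1"
    by (rule closed_pp[of "adjacent B" e, OF asym esym eabs irr ind])
  obtain s where sabs: "\<And>v. \<bar>s v\<bar> = 1" and es: "\<And>i j. adjacent B i j \<Longrightarrow> e i j = s i * s j"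
    using coboundary[of "adjacent B" e, OF asym esym eabs clw] by blast
  have ss: "s v * s v = 1" for v using abs_mult_self_eq[of "s v"] sabs[of v] by simp
  have sv: "s v = 1 \<or> s v = -1" for v using sabs[of v] by arith
  have A'eq: "A'$i$j = s i * s j * A$i$j" for i j
  proof (cases "adjacent B i j")
    case True then show ?thesis using AA es by simp
  next
    case False
    show ?thesis
    proof (cases "i = j")
      case True then show ?thesis using A2 A2' ss by simp
    next
      case False
      then show ?thesis using Anz[OF False \<open>\<not> adjacent B i j\<close>] AA[of i j] by simp
    qed
  qed
  obtain ks where ks: "set ks = {v. s v = -1}" "distinct ks"
    using finite_distinct_list[of "{v. s v = -1}"] by auto
  have sig: "(if v \<in> set ks then -1 else 1) = s v" for v using ks(1) sv[of v] by auto
  have part1: "A' = sign_changes ks A"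
    unfolding sign_changes_def fold_sc[OF ks(2)] sig by (simp add: vec_eq_iff A'eq)
  have dA'': "is_symmetrizer d A'"
  proof -
    have "d$i * of_int (A'$i$j) = d$j * of_int (A'$j$i)" for i j
    proof -
      have "d$i * of_int (A'$i$j) = of_int (s i * s j) * (d$i * of_int (A$i$j))"
        by (simp add: A'eq algebra_simps)
      also have "\<dots> = of_int (s i * s j) * (d$j * of_int (A$j$i))"
        using dA unfolding is_symmetrizer_def by simp
      also have "\<dots> = d$j * of_int (A'$j$i)" by (simp add: A'eq algebra_simps)
      finally show ?thesis .
    qed
    then show ?thesis using dA unfolding is_symmetrizer_def by simp
  qed
  define E :: "int^'n^'n" where "E = (\<chi> i j. if i = j then s i else 0)"
  have detE: "det E = (\<Prod>i\<in>UNIV. s i)"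
    by (subst det_diagonal) (auto simp: E_def)
  have "det E * det E = (\<Prod>i\<in>UNIV. s i * s i)" unfolding detE by (simp add: prod.distrib)
  also have "\<dots> = 1" using ss by simp
  finally have dE: "det E = 1 \<or> det E = -1" by (simp add: square_eq_1_iff)
  have ER: "(\<chi> i j. real_of_int (E$i$j)) = (\<chi> i j. if i = j then real_of_int (s i) else 0)"
    by (simp add: vec_eq_iff E_def)
  have "sym_form d A' = transpose (\<chi> i j. real_of_int (E$i$j)) ** sym_form d A ** (\<chi> i j. real_of_int (E$i$j))"
    unfolding ER by (simp add: vec_eq_iff diag_conj sym_form_def A'eq algebra_simps)
  hence "qc_equivalent A A'" unfolding qc_equivalent_def using dA dA'' dE by blast
  with part1 show ?thesis by blast
qed

end
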